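(* Let $n\ge2$ and $k\le n$ be integers with $k\ge n/2+1$, $d(n,k)=\frac{(n-k+1)(n-k+2)}{2}$ and $c(n,k)=\frac{n(n-1)}{2}-d(n,k)$. Then there is a diffeomorphism $$\mathbb{U}(n,\mathbb{R})/\mathbb{U}_k(n,\mathbb{Z})\cong T^{d(n,k)}\times\mathbb{R}^{c(n,k)},$$ identifying the homogeneous space (quotient by right multiplication) with the (trivial) normal bundle of the torus $T^{d(n,k)}\cong\mathbb{U}_k(n,\mathbb{R})/\mathbb{U}_k(n,\mathbb{Z})\subseteq\mathbb{U}(n,\mathbb{R})/\mathbb{U}_k(n,\mathbb{Z})$.
   Context: For $F\in\{\mathbb{Z},\mathbb{R}\}$, $\mathbb{U}(n,F)$ is the group of upper triangular $n\times n$ matrices over $F$ with $1$'s on the diagonal, and $\mathbb{U}_k(n,F)$ is its subgroup of matrices $(a_{rs})$ with $a_{rs}=0$ whenever $1\le s-r\le k-2$. *)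

theory Defs
  imports "HOL-Analysis.Analysis"
begin

text \<open>n x n matrices are real^'n^'n, with the rows/columns ordered by the linear
order of the finite index type 'n; pos i is the (0-based) position of i.\<close>

definition pos :: "'n::{finite,linorder} \<Rightarrow> nat" where
  "pos i = card {j. j < i}"

definition UR :: "(real^('n::{finite,linorder})^('n::{finite,linorder})) set" where
  "UR = {a. (\<forall>i. a$i$i = 1) \<and> (\<forall>i j. j < i \<longrightarrow> a$i$j = 0)}"

definition UkR :: "nat \<Rightarrow> (real^('n::{finite,linorder})^('n::{finite,linorder})) set" where
  "UkR k = {a \<in> UR. \<forall>r s. 1 \<le> int (pos s) - int (pos r) \<and> int (pos s) - int (pos r) \<le> int k - 2
              \<longrightarrow> a$r$s = 0}"

definition UkZ :: "nat \<Rightarrow> (real^('n::{finite,linorder})^('n::{finite,linorder})) set" where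
  "UkZ k = {a \<in> UkR k. \<forall>i j. a$i$j \<in> \<int>}"

text \<open>Tangent directions of U(n,R): strictly upper triangular matrices.\<close>
definition strict_upper :: "(real^('n::{finite,linorder})^('n::{finite,linorder})) set" where
  "strict_upper = {a. \<forall>i j. j \<le> i \<longrightarrow> a$i$j = 0}"

text \<open>C-infinity maps on a finite dimensional space: all iterated directional
(equivalently partial) derivatives exist everywhere and are continuous.\<close>
inductive iter_dderiv :: "('a::real_normed_vector \<Rightarrow> 'b::real_normed_vector) \<Rightarrow> ('a \<Rightarrow> 'b) \<Rightarrow> bool"
  for f where
  base: "iter_dderiv f f"
| step: "iter_dderiv f g \<Longrightarrow> iter_dderiv f (\<lambda>x. vector_derivative (\<lambda>t. g (x + t *\<^sub>R v)) (at 0))"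

definition smooth_map :: "('a::euclidean_space \<Rightarrow> 'b::real_normed_vector) \<Rightarrow> bool" where
  "smooth_map f \<longleftrightarrow> (\<forall>g. iter_dderiv f g \<longrightarrow>
      continuous_on UNIV g \<and> (\<forall>v x. (\<lambda>t::real. g (x + t *\<^sub>R v)) differentiable (at 0)))"

definition torus :: "(complex^'d) set" where
  "torus = {z. \<forall>i. norm (z$i) = 1}"

definition dnk :: "nat \<Rightarrow> nat \<Rightarrow> nat" where
  "dnk n k = ((n - k + 1) * (n - k + 2)) div 2"

definition cnk :: "nat \<Rightarrow> nat \<Rightarrow> nat" where
  "cnk n k = (n * (n - 1)) div 2 - dnk n k"

end

theory Submission
  imports Defs
begin

inductive polyf :: "('a::real_normed_vector \<Rightarrow> 'b::real_normed_field) \<Rightarrow> bool" where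
  pconst: "polyf (\<lambda>x. c)"
| plin: "bounded_linear l \<Longrightarrow> polyf l"
| padd: "polyf p \<Longrightarrow> polyf q \<Longrightarrow> polyf (\<lambda>x. p x + q x)"
| pmult: "polyf p \<Longrightarrow> polyf q \<Longrightarrow> polyf (\<lambda>x. p x * q x)"

lemma polyf_deriv:
  assumes "polyf p"
  shows "\<exists>D. (\<forall>x. (p has_derivative D x) (at x)) \<and> (\<forall>v. polyf (\<lambda>x. D x v))"
  using assms
proof induction
  case (pconst c)
  show ?case by (rule exI[of _ "\<lambda>x h. 0"]) (auto intro: polyf.pconst)
next
  case (plin l)
  show ?case by (rule exI[of _ "\<lambda>x. l"]) (auto intro: polyf.pconst bounded_linear.has_derivative[OF plin has_derivative_ident])
next
  case (padd p q)
  then obtain Dp Dq where "\<forall>x. (p has_derivative Dp x) (at x)" "\<forall>v. polyf (\<lambda>x. Dp x v)"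
     "\<forall>x. (q has_derivative Dq x) (at x)" "\<forall>v. polyf (\<lambda>x. Dq x v)" by blast
  then show ?case
    by (intro exI[of _ "\<lambda>x h. Dp x h + Dq x h"]) (auto intro: polyf.padd has_derivative_add)
next
  case (pmult p q)
  then obtain Dp Dq where "\<forall>x. (p has_derivative Dp x) (at x)" "\<forall>v. polyf (\<lambda>x. Dp x v)"
     "\<forall>x. (q has_derivative Dq x) (at x)" "\<forall>v. polyf (\<lambda>x. Dq x v)" by blast
  then show ?case
    by (intro exI[of _ "\<lambda>x h. p x * Dq x h + Dp x h * q x"])
       (auto intro!: polyf.padd polyf.pmult pmult.hyps has_derivative_mult)
qed

lemma polyf_sum: "finite S \<Longrightarrow> (\<And>i. i \<in> S \<Longrightarrow> polyf (p i)) \<Longrightarrow> polyf (\<lambda>x. \<Sum>i\<in>S. p i x)"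
  by (induction S rule: finite_induct) (auto intro: polyf.intros)

lemma polyf_of_real: "polyf (p :: 'a::real_normed_vector \<Rightarrow> real) \<Longrightarrow> polyf (\<lambda>x. (of_real (p x) :: 'b::real_normed_field))"
proof (induction rule: polyf.induct)
  case (plin l)
  have "bounded_linear (\<lambda>x. (of_real (l x)::'b))"
    using bounded_linear_compose[OF bounded_linear_of_real plin] by (simp add: o_def)
  then show ?case by (rule polyf.plin)
qed (auto intro: polyf.intros)

definition Ecl :: "('a::real_normed_vector \<Rightarrow> complex) \<Rightarrow> bool" where
  "Ecl h \<longleftrightarrow> (\<exists>s r. polyf s \<and> polyf r \<and> h = (\<lambda>x. exp (s x) * r x))"

lemma Ecl_deriv:
  assumes "Ecl h"
  shows "\<exists>D. (\<forall>x. (h has_derivative D x) (at x)) \<and> (\<forall>v. Ecl (\<lambda>x. D x v))"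
proof -
  obtain s r where sr: "polyf s" "polyf r" "h = (\<lambda>x. exp (s x) * r x)" using assms Ecl_def by blast
  obtain Ds where Ds: "\<forall>x. (s has_derivative Ds x) (at x)" "\<forall>v. polyf (\<lambda>x. Ds x v)"
    using polyf_deriv[OF sr(1)] by blast
  obtain Dr where Dr: "\<forall>x. (r has_derivative Dr x) (at x)" "\<forall>v. polyf (\<lambda>x. Dr x v)"
    using polyf_deriv[OF sr(2)] by blast
  have e: "((\<lambda>x. exp (s x)) has_derivative (\<lambda>h. exp (s x) * Ds x h)) (at x)" for x
  proof -
    have "(exp has_derivative (\<lambda>h. exp (s x) * h)) (at (s x))"
      using DERIV_exp[of "s x"] by (simp add: has_field_derivative_def)
    from diff_chain_at[OF Ds(1)[rule_format, of x] this] show ?thesis by (simp add: o_def)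
  qed
  show ?thesis
  proof (intro exI[of _ "\<lambda>x h. exp (s x) * Dr x h + exp (s x) * Ds x h * r x"] conjI allI)
    fix x show "(h has_derivative (\<lambda>h. exp (s x) * Dr x h + exp (s x) * Ds x h * r x)) (at x)"
      unfolding sr(3) using has_derivative_mult[OF e Dr(1)[rule_format, of x]] by simp
  next
    fix v
    have "polyf (\<lambda>x. Dr x v + Ds x v * r x)" using Ds Dr sr by (auto intro!: polyf.padd polyf.pmult)
    moreover have "(\<lambda>x. exp (s x) * Dr x v + exp (s x) * Ds x v * r x) = (\<lambda>x. exp (s x) * (Dr x v + Ds x v * r x))"
      by (simp add: algebra_simps)
    ultimately show "Ecl (\<lambda>x. exp (s x) * Dr x v + exp (s x) * Ds x v * r x)"
      unfolding Ecl_def using sr(1) by metis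
  qed
qed


lemma vec_sum_axis: "(\<Sum>i\<in>UNIV. axis i (v $ i)) = (v :: 'b::real_normed_vector ^ 'd)"
  by (simp add: vec_eq_iff axis_def if_distrib cong: if_cong)

lemma has_derivative_vec_comp:
  fixes f :: "'a::real_normed_vector \<Rightarrow> 'b::real_normed_vector ^ 'd"
  assumes "\<And>i. ((\<lambda>x. f x $ i) has_derivative (\<lambda>h. f' h $ i)) (at x)"
  shows "(f has_derivative f') (at x)"
proof -
  have bl: "bounded_linear (axis i :: 'b::real_normed_vector \<Rightarrow> 'b^'d)" for i
  proof (rule bounded_linear_intro[where K=1])
    fix x :: 'b
    have "norm (axis i x :: 'b^'d) \<le> (\<Sum>j\<in>UNIV. norm (axis i x $ j))" unfolding norm_vec_def by (rule L2_set_le_sum) simp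
    also have "\<dots> = norm x" by (simp add: axis_def if_distrib cong: if_cong)
    finally show "norm (axis i x :: 'b^'d) \<le> norm x * 1" by simp
  qed (auto simp: axis_def vec_eq_iff)
  have "((\<lambda>x. \<Sum>i\<in>UNIV. axis i (f x $ i)) has_derivative (\<lambda>h. \<Sum>i\<in>UNIV. axis i (f' h $ i))) (at x)"
    by (rule has_derivative_sum) (rule bounded_linear.has_derivative[OF bl assms])
  then show ?thesis by (simp add: vec_sum_axis)
qed

definition Gcl :: "('a::real_normed_vector \<Rightarrow> (complex^'d) \<times> 'c::real_normed_vector) \<Rightarrow> bool" where
  "Gcl g \<longleftrightarrow> (\<exists>l c. bounded_linear l \<and> (\<forall>x. snd (g x) = l x + c)) \<and> (\<forall>i. Ecl (\<lambda>x. fst (g x) $ i))"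

lemma Gcl_deriv:
  assumes "Gcl g"
  shows "\<exists>D. (\<forall>x. (g has_derivative D x) (at x)) \<and> (\<forall>v. Gcl (\<lambda>x. D x v))"
proof -
  obtain l c where lc: "bounded_linear l" "\<forall>x. snd (g x) = l x + c" using assms Gcl_def by blast
  have "\<forall>i. \<exists>D. (\<forall>x. ((\<lambda>x. fst (g x) $ i) has_derivative D x) (at x)) \<and> (\<forall>v. Ecl (\<lambda>x. D x v))"
    using assms Ecl_deriv unfolding Gcl_def by blast
  then obtain D where D0: "\<forall>i. (\<forall>x. ((\<lambda>x. fst (g x) $ i) has_derivative D i x) (at x)) \<and> (\<forall>v. Ecl (\<lambda>x. D i x v))"
    by (rule choice[THEN exE]) blast
  have D: "\<And>i x. ((\<lambda>x. fst (g x) $ i) has_derivative D i x) (at x)" "\<And>i v. Ecl (\<lambda>x. D i x v)"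
    using D0 by auto
  have gx: "g = (\<lambda>x. (fst (g x), l x + c))" using lc(2) by (simp add: fun_eq_iff prod_eq_iff)
  show ?thesis
  proof (intro exI[of _ "\<lambda>x h. ((\<chi> i. D i x h), l h)"] conjI allI)
    fix x
    have 1: "((\<lambda>x. fst (g x)) has_derivative (\<lambda>h. \<chi> i. D i x h)) (at x)"
      by (rule has_derivative_vec_comp) (simp add: D)
    have 2: "((\<lambda>x. l x + c) has_derivative l) (at x)"
      using has_derivative_add[OF bounded_linear.has_derivative[OF lc(1) has_derivative_ident] has_derivative_const[of c]]
      by simp
    show "(g has_derivative (\<lambda>h. ((\<chi> i. D i x h), l h))) (at x)"
      by (subst gx) (rule has_derivative_Pair[OF 1 2])
  next
    fix v
    show "Gcl (\<lambda>x. ((\<chi> i. D i x v), l v))"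
      unfolding Gcl_def using D(2) by (auto intro!: exI[of _ "\<lambda>x. 0"] bounded_linear_zero)
  qed
qed

lemma vdd:
  assumes "\<forall>x. (g has_derivative D x) (at x)"
  shows "((\<lambda>t. g (x + t *\<^sub>R v)) has_vector_derivative D x v) (at 0)"
proof -
  have l: "((\<lambda>t::real. x + t *\<^sub>R v) has_derivative (\<lambda>t. t *\<^sub>R v)) (at 0)"
    by (auto intro!: derivative_eq_intros)
  have "(g has_derivative D x) (at (x + 0 *\<^sub>R v))" using assms by simp
  from diff_chain_at[OF l this] have "((\<lambda>t. g (x + t *\<^sub>R v)) has_derivative (\<lambda>t. D x (t *\<^sub>R v))) (at 0)"
    by (simp add: o_def)
  moreover have "linear (D x)" using assms has_derivative_linear by blast
  ultimately show ?thesis unfolding has_vector_derivative_def by (simp add: linear_scale)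
qed

lemma Gcl_smooth:
  fixes f :: "'a::euclidean_space \<Rightarrow> (complex^'d) \<times> 'c::real_normed_vector"
  assumes "Gcl f"
  shows "smooth_map f"
proof -
  have G: "Gcl g" if "iter_dderiv f g" for g
    using that
  proof (induction rule: iter_dderiv.induct)
    case base then show ?case using assms .
  next
    case (step g v)
    then obtain D where D: "\<forall>x. (g has_derivative D x) (at x)" "\<forall>v. Gcl (\<lambda>x. D x v)"
      using Gcl_deriv by blast
    have "(\<lambda>x. vector_derivative (\<lambda>t. g (x + t *\<^sub>R v)) (at 0)) = (\<lambda>x. D x v)"
      using vdd[OF D(1)] vector_derivative_at by blast
    then show ?case using D(2) by simp
  qed
  show ?thesis unfolding smooth_map_def
  proof (intro allI impI, rule conjI)
    fix g assume "iter_dderiv f g"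
    then obtain D where D: "\<forall>x. (g has_derivative D x) (at x)"
      using Gcl_deriv G by blast
    show "continuous_on UNIV g"
      using D has_derivative_continuous continuous_at_imp_continuous_on by blast
  next
    fix g assume "iter_dderiv f g"
    then obtain D where D: "\<forall>x. (g has_derivative D x) (at x)"
      using Gcl_deriv G by blast
    show "\<forall>v x. (\<lambda>t::real. g (x + t *\<^sub>R v)) differentiable (at 0)"
      using vdd[OF D] unfolding has_vector_derivative_def differentiable_def by blast
  qed
qed


lemma pos_mono: "(i::'n::{finite,linorder}) < j \<Longrightarrow> pos i < pos j"
  unfolding pos_def by (rule psubset_card_mono) auto

lemma pos_less_iff: "pos (i::'n::{finite,linorder}) < pos j \<longleftrightarrow> i < j"
proof
  assume "pos i < pos j" then show "i < j"
    using pos_mono[of j i] by (cases i j rule: linorder_cases) auto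
qed (rule pos_mono)

lemma pos_eq_iff: "pos (i::'n::{finite,linorder}) = pos j \<longleftrightarrow> i = j"
proof
  assume "pos i = pos j" then show "i = j"
    using pos_mono[of j i] pos_mono[of i j] by (cases i j rule: linorder_cases) auto
qed simp

lemma pos_lt: "pos (i::'n::{finite,linorder}) < CARD('n)"
  unfolding pos_def by (rule psubset_card_mono) auto

lemma pos_bij: "bij_betw (pos :: 'n::{finite,linorder} \<Rightarrow> nat) UNIV {..<CARD('n)}"
proof -
  have inj: "inj (pos :: 'n \<Rightarrow> nat)" by (meson injI pos_eq_iff)
  have "pos ` (UNIV::'n set) \<subseteq> {..<CARD('n)}" using pos_lt by auto
  moreover have "card (pos ` (UNIV::'n set)) = card {..<CARD('n)}" using card_image[OF inj] by simp
  ultimately have "pos ` (UNIV::'n set) = {..<CARD('n)}"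
    by (simp add: card_subset_eq)
  then show ?thesis using inj by (simp add: bij_betw_def)
qed

definition dl :: "'n::{finite,linorder} \<Rightarrow> 'n \<Rightarrow> int" where
  "dl r s = int (pos s) - int (pos r)"

lemma dl_lt: "dl (r::'n::{finite,linorder}) s < int CARD('n)"
  using pos_lt[of s] unfolding dl_def by linarith

lemma dl_0: "dl r s = 0 \<longleftrightarrow> r = s"
  unfolding dl_def using pos_eq_iff by fastforce

lemma dl_neg: "dl r s < 0 \<longleftrightarrow> s < r"
  unfolding dl_def using pos_less_iff[of s r] by linarith

lemma dl_pos: "0 < dl r s \<longleftrightarrow> r < s"
  unfolding dl_def using pos_less_iff[of r s] by linarith

definition supp_ge :: "real^('n::{finite,linorder})^('n::{finite,linorder}) \<Rightarrow> int \<Rightarrow> bool" where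
  "supp_ge a \<alpha> \<longleftrightarrow> (\<forall>r s. a$r$s \<noteq> 0 \<longrightarrow> \<alpha> \<le> dl r s)"

lemma supp_mult:
  assumes "supp_ge a \<alpha>" "supp_ge b \<beta>"
  shows "supp_ge (a ** b) (\<alpha> + \<beta>)"
  unfolding supp_ge_def
proof (intro allI impI)
  fix r s assume "(a ** b) $ r $ s \<noteq> 0"
  then have "(\<Sum>t\<in>UNIV. a$r$t * b$t$s) \<noteq> 0" by (simp add: matrix_matrix_mult_def)
  then obtain t where "a$r$t * b$t$s \<noteq> 0" using sum.neutral[of UNIV "\<lambda>t. a$r$t * b$t$s"] by blast
  then have "\<alpha> \<le> dl r t" "\<beta> \<le> dl t s" using assms unfolding supp_ge_def by auto
  then show "\<alpha> + \<beta> \<le> dl r s" unfolding dl_def by linarith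
qed

lemma supp_add: assumes "supp_ge a \<alpha>" "supp_ge b \<alpha>" shows "supp_ge (a + b) \<alpha>"
  unfolding supp_ge_def
proof (intro allI impI)
  fix r s assume "(a + b)$r$s \<noteq> 0"
  then have "a$r$s \<noteq> 0 \<or> b$r$s \<noteq> 0" by auto
  then show "\<alpha> \<le> dl r s" using assms unfolding supp_ge_def by blast
qed

lemma supp_neg: "supp_ge a \<alpha> \<Longrightarrow> supp_ge (- a) \<alpha>"
  unfolding supp_ge_def by simp

lemma supp_diff: assumes "supp_ge a \<alpha>" "supp_ge b \<alpha>" shows "supp_ge (a - b) \<alpha>"
  unfolding supp_ge_def
proof (intro allI impI)
  fix r s assume "(a - b)$r$s \<noteq> 0"
  then have "a$r$s \<noteq> 0 \<or> b$r$s \<noteq> 0" by auto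
  then show "\<alpha> \<le> dl r s" using assms unfolding supp_ge_def by blast
qed

lemma supp_zero: "supp_ge 0 \<alpha>"
  unfolding supp_ge_def by simp

lemma supp_sum: "finite S \<Longrightarrow> (\<And>i. i \<in> S \<Longrightarrow> supp_ge (f i) \<alpha>) \<Longrightarrow> supp_ge (\<Sum>i\<in>S. f i) \<alpha>"
  by (induction S rule: finite_induct) (auto intro: supp_add supp_zero)

lemma supp_mono: "supp_ge a \<alpha> \<Longrightarrow> \<beta> \<le> \<alpha> \<Longrightarrow> supp_ge a \<beta>"
  unfolding supp_ge_def using order_trans by blast

lemma supp_mat1: "supp_ge (mat 1) 0"
  unfolding supp_ge_def mat_def by (auto simp: dl_def split: if_splits)

lemma supp_big: "supp_ge (a::real^('n::{finite,linorder})^('n::{finite,linorder})) \<alpha> \<Longrightarrow> int CARD('n) \<le> \<alpha> \<Longrightarrow> a = 0"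
proof -
  assume a: "supp_ge a \<alpha>" "int CARD('n) \<le> \<alpha>"
  have "a$r$s = 0" for r s
  proof (rule ccontr)
    assume "a$r$s \<noteq> 0"
    then have "\<alpha> \<le> dl r s" using a(1) unfolding supp_ge_def by blast
    then show False using dl_lt[of r s] a(2) by linarith
  qed
  then show "a = 0" by (simp add: vec_eq_iff)
qed

fun mpow :: "real^'n^'n \<Rightarrow> nat \<Rightarrow> real^'n^'n" where
  "mpow N 0 = mat 1"
| "mpow N (Suc j) = N ** mpow N j"

lemma supp_mpow: "supp_ge N 1 \<Longrightarrow> supp_ge (mpow N j) (int j)"
proof (induction j)
  case 0 then show ?case using supp_mat1 by simp
next
  case (Suc j)
  then show ?case using supp_mult[OF Suc.prems Suc.IH] by (simp add: add.commute)
qed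

lemma matrix_add_rdistrib': "((B + C) ** A) = (B ** A) + (C ** A)"
  by (vector matrix_matrix_mult_def sum.distrib[symmetric] field_simps)

lemma matrix_neg_left: "(- A) ** B = - (A ** (B::real^'n^'n))"
  by (simp add: matrix_matrix_mult_def vec_eq_iff sum_negf)

lemma matrix_neg_right: "A ** (- B) = - (A ** (B::real^'n^'n))"
  by (simp add: matrix_matrix_mult_def vec_eq_iff sum_negf)

lemma matrix_diff_ldistrib: "A ** (B - C) = A ** B - A ** (C::real^'n^'n)"
  by (metis diff_conv_add_uminus matrix_add_ldistrib matrix_neg_right)

lemma matrix_sum_ldistrib: "finite S \<Longrightarrow> A ** (\<Sum>i\<in>S. f i) = (\<Sum>i\<in>S. A ** (f i::real^'n^'n))"
  by (induction S rule: finite_induct) (auto simp: matrix_add_ldistrib)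

lemma neumann: "(mat 1 + N) ** (\<Sum>j<m. mpow (- N) j) = mat 1 - mpow (- N) m"
proof (induction m)
  case 0 then show ?case by simp
next
  case (Suc m)
  have A: "(mat 1 + N) ** (\<Sum>j<Suc m. mpow (- N) j) = (mat 1 + N) ** (\<Sum>j<m. mpow (- N) j) + (mat 1 + N) ** mpow (- N) m"
    by (simp only: sum.lessThan_Suc matrix_add_ldistrib)
  have B: "(mat 1 + N) ** mpow (- N) m = mpow (- N) m + N ** mpow (- N) m"
    by (simp only: matrix_add_rdistrib' matrix_mul_lid)
  have C: "mpow (- N) (Suc m) = - (N ** mpow (- N) m)" by (simp add: matrix_neg_left)
  show ?case unfolding A B C Suc.IH by (simp add: algebra_simps)
qed

definition Mset :: "nat \<Rightarrow> 'n::{finite,linorder} \<Rightarrow> 'n \<Rightarrow> bool" where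
  "Mset k r s \<longleftrightarrow> 1 \<le> dl r s \<and> dl r s \<le> int k - 2"
definition Fset :: "nat \<Rightarrow> 'n::{finite,linorder} \<Rightarrow> 'n \<Rightarrow> bool" where
  "Fset k r s \<longleftrightarrow> int k - 1 \<le> dl r s"

definition Mp :: "nat \<Rightarrow> real^('n::{finite,linorder})^('n::{finite,linorder}) \<Rightarrow> real^('n::{finite,linorder})^('n::{finite,linorder})" where
  "Mp k g = (\<chi> r s. if Mset k r s then g$r$s else 0)"
definition Fp :: "nat \<Rightarrow> real^('n::{finite,linorder})^('n::{finite,linorder}) \<Rightarrow> real^('n::{finite,linorder})^('n::{finite,linorder})" where
  "Fp k g = (\<chi> r s. if Fset k r s then g$r$s else 0)"
definition Pinv :: "nat \<Rightarrow> real^('n::{finite,linorder})^('n::{finite,linorder}) \<Rightarrow> real^('n::{finite,linorder})^('n::{finite,linorder})" where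
  "Pinv k g = (\<Sum>j<CARD('n). mpow (- Mp k g) j)"
definition Am :: "nat \<Rightarrow> real^('n::{finite,linorder})^('n::{finite,linorder}) \<Rightarrow> real^('n::{finite,linorder})^('n::{finite,linorder})" where
  "Am k g = Pinv k g ** Fp k g"

lemma Mp_add: "Mp k (a + b) = Mp k a + Mp k b"
  by (simp add: Mp_def vec_eq_iff)
lemma Mp_scale: "Mp k (c *\<^sub>R a) = c *\<^sub>R Mp k a"
  by (simp add: Mp_def vec_eq_iff)
lemma Fp_add: "Fp k (a + b) = Fp k a + Fp k b"
  by (simp add: Fp_def vec_eq_iff)
lemma Fp_scale: "Fp k (c *\<^sub>R a) = c *\<^sub>R Fp k a"
  by (simp add: Fp_def vec_eq_iff)

lemma Mp_mat1: "Mp k (mat 1) = 0"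
  by (auto simp: Mp_def Mset_def vec_eq_iff mat_def dl_def)
lemma Fp_mat1: "2 \<le> k \<Longrightarrow> Fp k (mat 1) = 0"
  by (auto simp: Fp_def Fset_def vec_eq_iff mat_def dl_def)

lemma supp_Mp: "supp_ge (Mp k g) 1"
  by (auto simp: supp_ge_def Mp_def Mset_def)
lemma supp_Fp: "supp_ge (Fp k g) (int k - 1)"
  by (auto simp: supp_ge_def Fp_def Fset_def)

lemma Mp_of_supp: "supp_ge X (int k - 1) \<Longrightarrow> Mp k X = 0"
  unfolding supp_ge_def Mp_def Mset_def vec_eq_iff by force
lemma Fp_of_supp: "supp_ge X (int k - 1) \<Longrightarrow> Fp k X = X"
  unfolding supp_ge_def Fp_def Fset_def vec_eq_iff by force

lemma Mp_of_M: "(\<forall>r s. \<not> Mset k r s \<longrightarrow> X$r$s = 0) \<Longrightarrow> Mp k X = X"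
  unfolding Mp_def vec_eq_iff by force
lemma Fp_of_M: "(\<forall>r s. \<not> Mset k r s \<longrightarrow> X$r$s = 0) \<Longrightarrow> Fp k X = 0"
  unfolding Fp_def Fset_def Mset_def vec_eq_iff by force

lemma supp_of_M: "(\<forall>r s. \<not> Mset k r s \<longrightarrow> X$r$s = 0) \<Longrightarrow> supp_ge X 1"
  unfolding supp_ge_def Mset_def by force

lemma PP1:
  fixes g :: "real^('n::{finite,linorder})^('n::{finite,linorder})"
  shows "(mat 1 + Mp k g) ** Pinv k g = mat 1"
proof -
  have "supp_ge (mpow (- Mp k g) CARD('n)) (int CARD('n))"
    by (rule supp_mpow[OF supp_neg[OF supp_Mp]])
  then have "mpow (- Mp k g) CARD('n) = 0"
    using supp_big by blast
  then show ?thesis unfolding Pinv_def neumann by simp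
qed

lemma PP2: "Pinv k g ** (mat 1 + Mp k g) = mat 1"
  using PP1 matrix_left_right_inverse by blast

lemma supp_Pinv: "supp_ge (Pinv k g) 0"
  unfolding Pinv_def
  by (rule supp_sum) (auto intro: supp_mono[OF supp_mpow[OF supp_neg[OF supp_Mp]]])

lemma supp_Am: "supp_ge (Am k g) (int k - 1)"
  unfolding Am_def using supp_mult[OF supp_Pinv supp_Fp] by simp

lemma UR_iff: "g \<in> UR \<longleftrightarrow> (\<forall>i. g$i$i = 1) \<and> supp_ge g 0"
proof
  assume a: "g \<in> UR"
  have "0 \<le> dl r s" if "g$r$s \<noteq> 0" for r s
  proof (rule ccontr)
    assume "\<not> 0 \<le> dl r s"
    then have "s < r" using dl_neg[of r s] by simp
    then have "g$r$s = 0" using a unfolding UR_def by blast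
    then show False using that by simp
  qed
  then show "(\<forall>i. g$i$i = 1) \<and> supp_ge g 0" using a unfolding UR_def supp_ge_def by blast
next
  assume a: "(\<forall>i. g$i$i = 1) \<and> supp_ge g 0"
  have "g$i$j = 0" if "j < i" for i j
  proof (rule ccontr)
    assume "g$i$j \<noteq> 0"
    then have "0 \<le> dl i j" using a unfolding supp_ge_def by blast
    then show False using dl_neg[of i j] that by simp
  qed
  then show "g \<in> UR" using a unfolding UR_def by blast
qed

lemma decomp:
  assumes "2 \<le> k" "g \<in> UR"
  shows "g = mat 1 + Mp k g + Fp k g"
proof -
  have g1: "\<And>i. g$i$i = 1" and g0: "\<And>r s. g$r$s \<noteq> 0 \<Longrightarrow> 0 \<le> dl r s"
    using assms(2) unfolding UR_iff supp_ge_def by auto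
  have "g$r$s = (mat 1 + Mp k g + Fp k g)$r$s" for r s
  proof -
    have comp: "(mat 1 + Mp k g + Fp k g)$r$s = (if r = s then 1 else 0) + (if Mset k r s then g$r$s else 0) + (if Fset k r s then g$r$s else 0)"
      by (simp add: Mp_def Fp_def mat_def)
    consider "dl r s < 0" | "dl r s = 0" | "1 \<le> dl r s \<and> dl r s \<le> int k - 2" | "int k - 1 \<le> dl r s" by linarith
    then show ?thesis
    proof cases
      case 1
      then have "g$r$s = 0" "r \<noteq> s" "\<not> Mset k r s" "\<not> Fset k r s"
        using g0[of r s] dl_0[of r s] assms(1) unfolding Mset_def Fset_def by auto
      then show ?thesis unfolding comp by simp
    next
      case 2
      then have "r = s" "\<not> Mset k r s" "\<not> Fset k r s"
        using dl_0[of r s] assms(1) unfolding Mset_def Fset_def by auto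
      then show ?thesis unfolding comp using g1 by simp
    next
      case 3
      then have "r \<noteq> s" "Mset k r s" "\<not> Fset k r s"
        using dl_0[of r s] unfolding Mset_def Fset_def by auto
      then show ?thesis unfolding comp by simp
    next
      case 4
      then have "r \<noteq> s" "\<not> Mset k r s" "Fset k r s"
        using dl_0[of r s] assms(1) unfolding Mset_def Fset_def by auto
      then show ?thesis unfolding comp by simp
    qed
  qed
  then show ?thesis by (simp add: vec_eq_iff)
qed

lemma factor:
  assumes "2 \<le> k" "g \<in> UR"
  shows "(mat 1 + Mp k g) ** (mat 1 + Am k g) = g"
proof -
  have "(mat 1 + Mp k g) ** (mat 1 + Am k g) = (mat 1 + Mp k g) + ((mat 1 + Mp k g) ** Pinv k g) ** Fp k g"
    unfolding Am_def matrix_add_ldistrib matrix_mul_rid matrix_mul_assoc ..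
  also have "\<dots> = g" unfolding PP1 using decomp[OF assms] by simp
  finally show ?thesis .
qed

lemma prod_zero:
  assumes "int CARD('n) \<le> 2 * (int k - 1)"
    and "supp_ge (a::real^('n::{finite,linorder})^('n::{finite,linorder})) (int k - 1)" "supp_ge b (int k - 1)"
  shows "a ** b = 0"
  using supp_big[OF supp_mult[OF assms(2,3)]] assms(1) by simp

lemma rmul:
  assumes "2 \<le> k" "int CARD('n) \<le> 2 * (int k - 1)"
    and "(g::real^('n::{finite,linorder})^('n::{finite,linorder})) \<in> UR" "supp_ge C (int k - 1)"
  shows "Mp k (g ** (mat 1 + C)) = Mp k g" "Am k (g ** (mat 1 + C)) = Am k g + C"
proof -
  have h: "g ** (mat 1 + C) = g + g ** C" by (simp add: matrix_add_ldistrib)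
  have sgC: "supp_ge (g ** C) (int k - 1)"
    using supp_mult[OF conjunct2[OF iffD1[OF UR_iff assms(3)]] assms(4)] by simp
  show M: "Mp k (g ** (mat 1 + C)) = Mp k g"
    unfolding h Mp_add Mp_of_supp[OF sgC] by simp
  have Pi: "Pinv k (g ** (mat 1 + C)) = Pinv k g" unfolding Pinv_def M ..
  have Fh: "Fp k (g ** (mat 1 + C)) = Fp k g + g ** C"
    unfolding h Fp_add Fp_of_supp[OF sgC] ..
  have "Pinv k g ** g = mat 1 + Am k g"
  proof -
    have "Pinv k g ** g = Pinv k g ** ((mat 1 + Mp k g) ** (mat 1 + Am k g))"
      using factor[OF assms(1,3)] by simp
    also have "\<dots> = mat 1 + Am k g" unfolding matrix_mul_assoc PP2 by simp
    finally show ?thesis .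
  qed
  then have "Pinv k g ** (g ** C) = C + Am k g ** C"
    by (simp add: matrix_mul_assoc matrix_add_rdistrib')
  also have "\<dots> = C" using prod_zero[OF assms(2) supp_Am assms(4)] by simp
  finally have "Pinv k g ** (g ** C) = C" .
  then have "Pinv k g ** (Fp k g + g ** C) = Am k g + C"
    by (simp only: Am_def matrix_add_ldistrib)
  then show "Am k (g ** (mat 1 + C)) = Am k g + C"
    unfolding Am_def[of k "g ** (mat 1 + C)"] Pi Fh .
qed

definition cnt :: "nat \<Rightarrow> nat \<Rightarrow> nat" where
  "cnt n m = card {(a,b). a < n \<and> b < n \<and> a + m \<le> b}"

lemma cnt_formula: "1 \<le> m \<Longrightarrow> 2 * cnt n m = (n + 1 - m) * (n - m)"
proof (induction n)
  case 0 then show ?case by (simp add: cnt_def)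
next
  case (Suc n)
  have eq: "{(a,b). a < Suc n \<and> b < Suc n \<and> a + m \<le> b} = {(a,b). a < n \<and> b < n \<and> a + m \<le> b} \<union> (\<lambda>a. (a, n)) ` {a. a + m \<le> n}"
    using Suc.prems by auto
  have fin1: "finite {(a,b). a < n \<and> b < n \<and> a + m \<le> b}"
    by (rule finite_subset[of _ "{..<n} \<times> {..<n}"]) auto
  have fin2: "finite {a. a + m \<le> n}" by (rule finite_subset[of _ "{..n}"]) auto
  have disj: "{(a,b). a < n \<and> b < n \<and> a + m \<le> b} \<inter> (\<lambda>a. (a, n)) ` {a. a + m \<le> n} = {}" by auto
  have c2: "card ((\<lambda>a. (a, n)) ` {a. a + m \<le> n}) = Suc n - m"
  proof -
    have "card ((\<lambda>a. (a, n)) ` {a. a + m \<le> n}) = card {a. a + m \<le> n}"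
      by (rule card_image) (auto simp: inj_on_def)
    also have "\<dots> = card {..<Suc n - m}" by (rule arg_cong[of _ _ card]) auto
    also have "\<dots> = Suc n - m" by simp
    finally show ?thesis .
  qed
  have "cnt (Suc n) m = cnt n m + (Suc n - m)"
    unfolding cnt_def eq using card_Un_disjoint[OF fin1 finite_imageI[OF fin2] disj] c2 by simp
  then have "2 * cnt (Suc n) m = (n + 1 - m) * (n - m) + 2 * (Suc n - m)" using Suc by simp
  also have "\<dots> = (Suc n + 1 - m) * (Suc n - m)"
  proof (cases "m \<le> n")
    case True
    then obtain t where "n = m + t" using le_Suc_ex by blast
    then show ?thesis by (simp add: algebra_simps)
  next
    case False
    then show ?thesis by (cases "m = Suc n") auto
  qed
  finally show ?case .
qed

lemma card_pos_pairs:
  "card {(r,s). Q (pos (r::'n::{finite,linorder})) (pos (s::'n))} = card {(a,b). a < CARD('n) \<and> b < CARD('n) \<and> Q a b}"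
proof -
  let ?S = "{(r,s). Q (pos (r::'n)) (pos (s::'n))}"
  let ?T = "{(a,b). a < CARD('n) \<and> b < CARD('n) \<and> Q a b}"
  have inj: "inj_on (map_prod pos pos :: 'n \<times> 'n \<Rightarrow> nat \<times> nat) ?S"
    unfolding inj_on_def using pos_eq_iff by auto
  have sub1: "map_prod pos pos ` ?S \<subseteq> ?T"
  proof
    fix p assume "p \<in> map_prod pos pos ` ?S"
    then obtain r s where "p = (pos r, pos s)" "Q (pos (r::'n)) (pos (s::'n))" by auto
    then show "p \<in> ?T" using pos_lt[of r] pos_lt[of s] by simp
  qed
  have sub2: "?T \<subseteq> map_prod pos pos ` ?S"
  proof
    fix p assume "p \<in> ?T"
    then obtain a b where p: "p = (a,b)" "a < CARD('n)" "b < CARD('n)" "Q a b" by auto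
    have im: "pos ` (UNIV::'n set) = {..<CARD('n)}" using pos_bij unfolding bij_betw_def by blast
    have "a \<in> pos ` (UNIV::'n set)" using im p(2) by simp
    then obtain r :: 'n where r: "a = pos r" by blast
    have "b \<in> pos ` (UNIV::'n set)" using im p(3) by simp
    then obtain s :: 'n where s: "b = pos s" by blast
    have "(r,s) \<in> ?S" using p(4) r s by simp
    moreover have "p = map_prod pos pos (r,s)" using p(1) r s by simp
    ultimately show "p \<in> map_prod pos pos ` ?S" by (rule rev_image_eqI)
  qed
  have "card (map_prod pos pos ` ?S) = card ?S" by (rule card_image[OF inj])
  moreover have "map_prod pos pos ` ?S = ?T" using sub1 sub2 by (rule equalityI)
  ultimately show ?thesis by simp
qed

lemma card_F:
  assumes "2 \<le> k" "k \<le> n" "CARD('n::{finite,linorder}) = n"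
  shows "card {(r,s). Fset k (r::'n) s} = dnk n k"
proof -
  have "{(r,s). Fset k (r::'n) s} = {(r,s). pos (r::'n) + (k - 1) \<le> pos (s::'n)}"
    using assms(1) by (auto simp: Fset_def dl_def)
  then have "card {(r,s). Fset k (r::'n) s} = cnt n (k - 1)"
    unfolding cnt_def using card_pos_pairs[where 'n='n and Q="\<lambda>a b. a + (k - 1) \<le> b"] assms(3) by simp
  moreover have h2: "(n - k + 1) * (n - k + 2) = 2 * cnt n (k - 1)"
    using cnt_formula[of "k - 1" n] assms by (simp add: Suc_diff_le)
  have "dnk n k = (2 * cnt n (k - 1)) div 2" unfolding dnk_def h2 ..
  ultimately show ?thesis by simp
qed

lemma card_M:
  assumes "2 \<le> k" "k \<le> n" "CARD('n::{finite,linorder}) = n"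
  shows "card {(r,s). Mset k (r::'n) s} = cnk n k"
proof -
  have U: "card {(r,s). pos (r::'n) + 1 \<le> pos (s::'n)} = cnt n 1"
    unfolding cnt_def using card_pos_pairs[where 'n='n and Q="\<lambda>a b. a + 1 \<le> b"] assms(3) by simp
  have "2 * cnt n 1 = n * (n - 1)" using cnt_formula[of 1 n] by simp
  then have U2: "cnt n 1 = n * (n - 1) div 2" by simp
  have eq: "{(r,s). Mset k (r::'n) s} = {(r,s). pos (r::'n) + 1 \<le> pos (s::'n)} - {(r,s). Fset k r s}"
    by (auto simp: Mset_def Fset_def dl_def)
  have sub: "{(r,s). Fset k (r::'n) s} \<subseteq> {(r,s). pos (r::'n) + 1 \<le> pos (s::'n)}"
    using assms(1) by (auto simp: Fset_def dl_def)
  have "card {(r,s). Mset k (r::'n) s} = cnt n 1 - dnk n k"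
    unfolding eq card_Diff_subset[OF finite sub] U card_F[OF assms] ..
  then show ?thesis unfolding cnk_def U2 .
qed

definition mpolyf :: "(real^('n::{finite,linorder})^('n::{finite,linorder}) \<Rightarrow> real^('n::{finite,linorder})^('n::{finite,linorder})) \<Rightarrow> bool" where
  "mpolyf M \<longleftrightarrow> (\<forall>r s. polyf (\<lambda>g. M g $ r $ s))"

lemma bl_entry: "bounded_linear (\<lambda>g::real^'n^'m. g $ r $ s)"
  using bounded_linear_compose[OF bounded_linear_vec_nth[of s] bounded_linear_vec_nth[of r]] .

lemma mpoly_const: "mpolyf (\<lambda>g. c)"
  unfolding mpolyf_def by (auto intro: pconst)

lemma mpoly_Mp: "mpolyf (Mp k)"
  unfolding mpolyf_def
proof (intro allI)
  fix r s
  show "polyf (\<lambda>g. Mp k g $ r $ s)"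
  proof (cases "Mset k r s")
    case True
    then have "(\<lambda>g. Mp k g $ r $ s) = (\<lambda>g. g $ r $ s)" by (simp add: Mp_def)
    then show ?thesis using plin[OF bl_entry[of r s]] by simp
  next
    case False
    then have "(\<lambda>g. Mp k g $ r $ s) = (\<lambda>g. 0)" by (simp add: Mp_def)
    then show ?thesis using pconst[of 0] by simp
  qed
qed

lemma mpoly_Fp: "mpolyf (Fp k)"
  unfolding mpolyf_def
proof (intro allI)
  fix r s
  show "polyf (\<lambda>g. Fp k g $ r $ s)"
  proof (cases "Fset k r s")
    case True
    then have "(\<lambda>g. Fp k g $ r $ s) = (\<lambda>g. g $ r $ s)" by (simp add: Fp_def)
    then show ?thesis using plin[OF bl_entry[of r s]] by simp
  next
    case False
    then have "(\<lambda>g. Fp k g $ r $ s) = (\<lambda>g. 0)" by (simp add: Fp_def)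
    then show ?thesis using pconst[of 0] by simp
  qed
qed

lemma mpoly_neg: "mpolyf M \<Longrightarrow> mpolyf (\<lambda>g. - M g)"
  unfolding mpolyf_def
proof (intro allI)
  fix r s assume "\<forall>r s. polyf (\<lambda>g. M g $ r $ s)"
  then have "polyf (\<lambda>g. (-1) * M g $ r $ s)" by (intro pmult pconst) auto
  then show "polyf (\<lambda>g. (- M g) $ r $ s)" by simp
qed

lemma mpoly_mult: "mpolyf A \<Longrightarrow> mpolyf B \<Longrightarrow> mpolyf (\<lambda>g. A g ** B g)"
  unfolding mpolyf_def matrix_matrix_mult_def
  by (auto intro!: polyf_sum pmult)

lemma mpoly_add: "mpolyf A \<Longrightarrow> mpolyf B \<Longrightarrow> mpolyf (\<lambda>g. A g + B g)"
  unfolding mpolyf_def by (auto intro!: padd)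

lemma mpoly_mpow: "mpolyf N \<Longrightarrow> mpolyf (\<lambda>g. mpow (N g) j)"
  by (induction j) (auto intro: mpoly_const mpoly_mult)

lemma mpoly_sum: "finite S \<Longrightarrow> (\<And>j. j \<in> S \<Longrightarrow> mpolyf (M j)) \<Longrightarrow> mpolyf (\<lambda>g. \<Sum>j\<in>S. M j g)"
  unfolding mpolyf_def by (auto intro!: polyf_sum)

lemma mpoly_Am: "mpolyf (Am k)"
proof -
  have "mpolyf (Pinv k)"
    unfolding Pinv_def by (intro mpoly_sum mpoly_mpow mpoly_neg mpoly_Mp) auto
  then have "mpolyf (\<lambda>g. Pinv k g ** Fp k g)" using mpoly_mult mpoly_Fp by blast
  then show ?thesis unfolding Am_def[abs_def] by simp
qed

lemma Ecl_exp: "polyf q \<Longrightarrow> Ecl (\<lambda>x. exp (2 * of_real pi * \<i> * of_real (q x)))"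
  unfolding Ecl_def
  by (rule exI[of _ "\<lambda>x. (2 * of_real pi * \<i>) * of_real (q x)"], rule exI[of _ "\<lambda>x. 1"])
     (auto intro!: pmult pconst polyf_of_real)

lemma bl_Mp: "bounded_linear (Mp k)"
proof -
  have "linear (Mp k)" by (rule linearI) (auto simp: Mp_add Mp_scale)
  then show ?thesis using linear_conv_bounded_linear by blast
qed

lemma E1: "norm (exp (2 * of_real pi * \<i> * of_real a)) = 1"
  by (simp add: norm_exp_eq_Re)

lemma E2: "c \<in> \<int> \<Longrightarrow> exp (2 * of_real pi * \<i> * of_real (a + c)) = exp (2 * of_real pi * \<i> * of_real a)"
proof -
  assume "c \<in> \<int>"
  then obtain m where m: "c = of_int m" by (auto elim: Ints_cases)
  show ?thesis unfolding exp_eq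
    by (rule exI[of _ m]) (simp add: m algebra_simps)
qed

lemma E3: "exp (2 * of_real pi * \<i> * of_real a) = exp (2 * of_real pi * \<i> * of_real b) \<Longrightarrow> a - b \<in> \<int>"
proof -
  assume "exp (2 * of_real pi * \<i> * of_real a) = exp (2 * of_real pi * \<i> * of_real b)"
  then obtain m :: int where "2 * of_real pi * \<i> * of_real a = 2 * of_real pi * \<i> * of_real b + of_int (2 * m) * pi * \<i>"
    unfolding exp_eq by blast
  then have "Im (2 * of_real pi * \<i> * of_real a) = Im (2 * of_real pi * \<i> * of_real b + of_int (2 * m) * pi * \<i>)"
    by simp
  then have "2 * pi * a = 2 * pi * b + 2 * m * pi" by simp
  then have "pi * (2 * (a - b - m)) = 0" by (simp add: algebra_simps)
  then have "a = b + m" using pi_gt_zero by simp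
  then show "a - b \<in> \<int>" by simp
qed

lemma E4: "norm z = 1 \<Longrightarrow> exp (2 * of_real pi * \<i> * of_real (Arg2pi z / (2 * pi))) = z"
proof -
  assume "norm z = 1"
  then have "exp (\<i> * of_real (Arg2pi z)) = z" using complex_norm_eq_1_exp by blast
  moreover have "2 * of_real pi * \<i> * of_real (Arg2pi z / (2 * pi)) = \<i> * (of_real (Arg2pi z) :: complex)"
    using pi_gt_zero by (simp add: field_simps)
  ultimately show ?thesis by simp
qed

lemma E5: "((\<lambda>t. exp (2 * of_real pi * \<i> * of_real (a + t * b))) has_vector_derivative
   (exp (2 * of_real pi * \<i> * of_real a) * (2 * of_real pi * \<i> * of_real b))) (at 0)"
proof -
  let ?c = "2 * of_real pi * \<i> * of_real a :: complex"
  let ?w = "2 * of_real pi * \<i> * of_real b :: complex"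
  have eq: "(\<lambda>t. exp (2 * of_real pi * \<i> * of_real (a + t * b))) = (\<lambda>t. exp (?c + t *\<^sub>R ?w))"
    by (auto simp: fun_eq_iff scaleR_conv_of_real algebra_simps)
  have inner: "((\<lambda>t::real. ?c + t *\<^sub>R ?w) has_derivative (\<lambda>t. t *\<^sub>R ?w)) (at 0)"
    by (auto intro!: derivative_eq_intros)
  have outer: "(exp has_derivative (\<lambda>h. exp ?c * h)) (at (?c + 0 *\<^sub>R ?w))"
    using DERIV_exp[of ?c] unfolding has_field_derivative_def by simp
  have "((\<lambda>t. exp (?c + t *\<^sub>R ?w)) has_derivative (\<lambda>t. exp ?c * (t *\<^sub>R ?w))) (at 0)"
    using diff_chain_at[OF inner outer] by (simp add: o_def)
  then show ?thesis unfolding eq has_vector_derivative_def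
    by (simp add: scaleR_conv_of_real algebra_simps)
qed

definition dset :: "nat \<Rightarrow> (real^('n::{finite,linorder})^('n::{finite,linorder})) set" where
  "dset k = (\<lambda>(r,s). axis r (axis s 1)) ` {(r,s). Mset k r s}"

lemma Basis_char: "(b::real^'n^'m) \<in> Basis \<longleftrightarrow> (\<exists>r s. b = axis r (axis s 1))"
  by (auto simp: Basis_vec_def)

lemma inner_axis2: "(X::real^'n^'m) \<bullet> axis r (axis s 1) = X $ r $ s"
  by (simp add: inner_axis)

lemma axis2_inj: "(axis r (axis s (1::real)) :: real^'n^'m) = axis r' (axis s' 1) \<longleftrightarrow> r = r' \<and> s = s'"
  by (auto simp: axis_eq_axis)

lemma dset_Basis: "dset k \<subseteq> Basis"
  unfolding dset_def Basis_char by auto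

lemma V_iff:
  fixes X :: "real^('n::{finite,linorder})^('n::{finite,linorder})"
  shows "X \<in> {x. \<forall>b\<in>Basis. b \<notin> dset k \<longrightarrow> x \<bullet> b = 0} \<longleftrightarrow> (\<forall>r s. \<not> Mset k r s \<longrightarrow> X$r$s = 0)"
proof
  assume a: "X \<in> {x. \<forall>b\<in>Basis. b \<notin> dset k \<longrightarrow> x \<bullet> b = 0}"
  show "\<forall>r s. \<not> Mset k r s \<longrightarrow> X$r$s = 0"
  proof (intro allI impI)
    fix r s :: 'n assume "\<not> Mset k r s"
    then have "axis r (axis s 1) \<notin> dset k" unfolding dset_def by (auto simp: axis2_inj)
    moreover have "axis r (axis s 1) \<in> (Basis :: (real^('n::{finite,linorder})^('n::{finite,linorder})) set)" unfolding Basis_char by blast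
    ultimately show "X$r$s = 0" using a inner_axis2[of X r s] by auto
  qed
next
  assume a: "\<forall>r s. \<not> Mset k r s \<longrightarrow> X$r$s = 0"
  show "X \<in> {x. \<forall>b\<in>Basis. b \<notin> dset k \<longrightarrow> x \<bullet> b = 0}"
  proof (safe)
    fix b :: "real^('n::{finite,linorder})^('n::{finite,linorder})" assume "b \<in> Basis" "b \<notin> dset k"
    then obtain r s where b: "b = axis r (axis s 1)" unfolding Basis_char by blast
    then have "\<not> Mset k r s" using \<open>b \<notin> dset k\<close> unfolding dset_def by auto
    then show "X \<bullet> b = 0" unfolding b inner_axis2 using a by simp
  qed
qed

lemma card_dset: "card (dset k :: (real^('n::{finite,linorder})^('n::{finite,linorder})) set) = card {(r,s). Mset k (r::'n) s}"
  unfolding dset_def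
  by (rule card_image) (auto simp: inj_on_def axis2_inj)

theorem mainTheorem5:
  fixes n k :: nat
  assumes "CARD('n) = n"
    and "CARD('d::finite) = dnk n k"
    and "n \<ge> 2" and "k \<le> n" and "real k \<ge> real n / 2 + 1"
  shows "\<exists>(f :: real^('n::{finite,linorder})^('n::{finite,linorder}) \<Rightarrow> (complex^'d) \<times> (real^('n::{finite,linorder})^('n::{finite,linorder}))) (V :: (real^('n::{finite,linorder})^('n::{finite,linorder})) set).
      subspace V \<and> dim V = cnk n k \<and>
      smooth_map f \<and>
      f ` UR = torus \<times> V \<and>
      (\<forall>g\<in>UR. \<forall>h\<in>UR. f g = f h \<longleftrightarrow> (\<exists>\<gamma>\<in>UkZ k. h = g ** \<gamma>)) \<and>
      (\<forall>g\<in>UR. \<exists>L. (f has_derivative L) (at g) \<and> (\<forall>X\<in>strict_upper. L X = 0 \<longrightarrow> X = 0)) \<and>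
      f ` UkR k = torus \<times> {0}"
proof -
  have rn: "real n \<ge> 2" using assms(3) by simp
  have k2: "2 \<le> k" using assms(5) rn by linarith
  have "real (n + 2) \<le> real (2 * k)" using assms(5) by simp
  then have "n + 2 \<le> 2 * k" by (simp only: of_nat_le_iff)
  then have "int (n + 2) \<le> int (2 * k)" by (simp only: of_nat_le_iff)
  then have kn: "int CARD('n) \<le> 2 * (int k - 1)" using assms(1) by simp
  define FP where "FP = {(r,s). Fset k (r::'n) s}"
  have cFP: "card FP = CARD('d)" using card_F[OF k2 assms(4) assms(1)] assms(2) unfolding FP_def by simp
  obtain e where e: "bij_betw e (UNIV::'d set) FP"
    using finite_same_card_bij[of "UNIV::'d set" FP] cFP by auto
  have eF: "\<And>i. Fset k (fst (e i)) (snd (e i))"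
    using e unfolding bij_betw_def FP_def by auto
  have esurj: "\<And>(r::'n) s. Fset k r s \<Longrightarrow> \<exists>i. e i = (r,s)"
  proof -
    fix r s :: 'n assume "Fset k r s"
    then have "(r,s) \<in> e ` UNIV" using e unfolding bij_betw_def FP_def by auto
    then show "\<exists>i. e i = (r,s)" by auto
  qed
  have einj: "inj e" using e unfolding bij_betw_def by blast
  define f where "f = (\<lambda>g::real^('n::{finite,linorder})^('n::{finite,linorder}). ((\<chi> i. exp (2 * of_real pi * \<i> * of_real (Am k g $ fst (e i) $ snd (e i)))) :: complex^'d, Mp k g))"
  define V where "V = {x::real^('n::{finite,linorder})^('n::{finite,linorder}). \<forall>b\<in>Basis. b \<notin> dset k \<longrightarrow> x \<bullet> b = 0}"
  have Vi: "\<And>X. X \<in> V \<longleftrightarrow> (\<forall>r s. \<not> Mset k r s \<longrightarrow> X$r$s = 0)" unfolding V_def by (rule V_iff)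
  have Gf: "Gcl f"
    unfolding Gcl_def
  proof (intro conjI allI)
    show "\<exists>l c. bounded_linear l \<and> (\<forall>x. snd (f x) = l x + c)"
      by (rule exI[of _ "Mp k"], rule exI[of _ 0]) (simp add: f_def bl_Mp)
  next
    fix i
    have "polyf (\<lambda>g. Am k g $ fst (e i) $ snd (e i))" using mpoly_Am unfolding mpolyf_def by blast
    then show "Ecl (\<lambda>x. fst (f x) $ i)" using Ecl_exp unfolding f_def by simp
  qed
  obtain D where D: "\<forall>x. (f has_derivative D x) (at x)" using Gcl_deriv[OF Gf] by blast
  have torusI: "\<And>g. fst (f g) \<in> torus" unfolding torus_def f_def by (simp add: E1)
  have constr: "\<exists>g\<in>UR. f g = (z, X) \<and> (X = 0 \<longrightarrow> g \<in> UkR k)" if z: "z \<in> torus" and X: "X \<in> V" for z X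
  proof -
    define \<theta> where "\<theta> = (\<lambda>i. Arg2pi (z$i) / (2*pi))"
    define B where "B = (\<chi> r s. if Fset k r s then \<theta> (inv e (r,s)) else 0)"
    define p where "p = mat 1 + X"
    define g where "g = p ** (mat 1 + B)"
    have XM: "\<forall>r s. \<not> Mset k r s \<longrightarrow> X$r$s = 0" using X Vi by blast
    have sX: "supp_ge X 1" using supp_of_M[OF XM] .
    have sp: "supp_ge p 0" unfolding p_def using supp_add[OF supp_mat1 supp_mono[OF sX]] by simp
    have sB: "supp_ge B (int k - 1)" by (simp add: supp_ge_def B_def Fset_def)
    have spB: "supp_ge (p ** B) (int k - 1)" using supp_mult[OF sp sB] by simp
    have g_eq: "g = mat 1 + X + p ** B" unfolding g_def matrix_add_ldistrib p_def by simp
    have Mpg: "Mp k g = X" unfolding g_eq Mp_add Mp_mat1 Mp_of_M[OF XM] Mp_of_supp[OF spB] by simp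
    have Fpg: "Fp k g = p ** B" unfolding g_eq Fp_add Fp_mat1[OF k2] Fp_of_M[OF XM] Fp_of_supp[OF spB] by simp
    have "Pinv k g ** p = mat 1" unfolding p_def using PP2[of k g] Mpg by simp
    then have Amg: "Am k g = B" unfolding Am_def Fpg matrix_mul_assoc by simp
    have "f g = (z, X)"
    proof -
      have "Am k g $ fst (e i) $ snd (e i) = \<theta> i" for i
        unfolding Amg B_def using eF[of i] inv_f_f[OF einj] by simp
      moreover have "norm (z$i) = 1" for i using z unfolding torus_def by blast
      then have "exp (\<i> * of_real (Arg2pi (z$i))) = z$i" for i using complex_norm_eq_1_exp by blast
      ultimately show ?thesis unfolding f_def Mpg by (simp add: vec_eq_iff \<theta>_def E4)
    qed
    moreover have gUR: "g \<in> UR"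
      unfolding UR_iff
    proof
      show "\<forall>i. g$i$i = 1"
      proof
        fix i
        have "\<not> Mset k (i::'n) i" by (simp add: Mset_def dl_def)
        then have "X$i$i = 0" using XM by blast
        moreover have "(p ** B)$i$i = 0" using spB k2 unfolding supp_ge_def dl_def by force
        ultimately show "g$i$i = 1" unfolding g_eq by (simp add: mat_def)
      qed
      show "supp_ge g 0" unfolding g_def using supp_mult[OF sp supp_add[OF supp_mat1 supp_mono[OF sB]]] k2 by simp
    qed
    moreover have "X = 0 \<longrightarrow> g \<in> UkR k"
    proof
      assume X0: "X = 0"
      have "g$r$s = 0" if "Mset k r s" for r s
      proof -
        have "r \<noteq> s" using that by (auto simp: Mset_def dl_def)
        moreover have "\<not> Fset k r s" using that by (auto simp: Mset_def Fset_def)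
        moreover have "g = mat 1 + B" unfolding g_def p_def X0 by simp
        ultimately show ?thesis by (simp add: B_def mat_def)
      qed
      then show "g \<in> UkR k" using gUR unfolding UkR_def Mset_def dl_def by blast
    qed
    ultimately show ?thesis by blast
  qed
  show ?thesis
  proof (intro exI[of _ f] exI[of _ V] conjI)
    show "subspace V" unfolding V_def by (rule subspace_substandard)
    show "dim V = cnk n k"
      unfolding V_def dim_substandard[OF dset_Basis] card_dset card_M[OF k2 assms(4,1)] ..
    show "smooth_map f" by (rule Gcl_smooth[OF Gf])
    show "f ` UR = torus \<times> V"
    proof
      show "f ` UR \<subseteq> torus \<times> V"
      proof
        fix y :: "(complex^'d) \<times> (real^('n::{finite,linorder})^('n::{finite,linorder}))" assume "y \<in> f ` UR"
        then obtain g where "y = f g" by blast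
        moreover have "Mp k g \<in> V" unfolding Vi by (simp add: Mp_def)
        ultimately show "y \<in> torus \<times> V" using torusI[of g] by (simp add: mem_Times_iff f_def)
      qed
      show "torus \<times> V \<subseteq> f ` UR"
      proof
        fix y :: "(complex^'d) \<times> (real^('n::{finite,linorder})^('n::{finite,linorder}))" assume "y \<in> torus \<times> V"
        then obtain z X where "y = (z, X)" "z \<in> torus" "X \<in> V" by blast
        then show "y \<in> f ` UR" using constr by (metis image_eqI)
      qed
    qed
    show "f ` UkR k = torus \<times> {0}"
    proof
      show "f ` UkR k \<subseteq> torus \<times> {0}"
      proof
        fix y :: "(complex^'d) \<times> (real^('n::{finite,linorder})^('n::{finite,linorder}))" assume "y \<in> f ` UkR k"
        then obtain g where g: "y = f g" "g \<in> UkR k" by blast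
        have "Mp k g = 0" using g(2) unfolding UkR_def Mp_def Mset_def dl_def by (simp add: vec_eq_iff)
        then show "y \<in> torus \<times> {0}" using torusI[of g] g(1) by (simp add: mem_Times_iff f_def)
      qed
      show "torus \<times> {0} \<subseteq> f ` UkR k"
      proof
        fix y :: "(complex^'d) \<times> (real^('n::{finite,linorder})^('n::{finite,linorder}))" assume "y \<in> torus \<times> {0::real^('n::{finite,linorder})^('n::{finite,linorder})}"
        then obtain z where z: "y = (z, 0)" "z \<in> torus" by blast
        have "0 \<in> V" unfolding Vi by simp
        then obtain g where "g \<in> UR" "f g = (z, 0)" "g \<in> UkR k" using constr[OF z(2)] by blast
        then show "y \<in> f ` UkR k" using z(1) by (metis image_eqI)
      qed
    qed
    show "\<forall>g\<in>UR. \<forall>h\<in>UR. f g = f h \<longleftrightarrow> (\<exists>\<gamma>\<in>UkZ k. h = g ** \<gamma>)"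
    proof (intro ballI iffI)
      fix g h :: "real^('n::{finite,linorder})^('n::{finite,linorder})" assume g: "g \<in> UR" and h: "h \<in> UR" and fe: "f g = f h"
      have M: "Mp k g = Mp k h" using fe unfolding f_def by simp
      have ints: "Am k h $ fst (e i) $ snd (e i) - Am k g $ fst (e i) $ snd (e i) \<in> \<int>" for i
      proof -
        have "fst (f g) $ i = fst (f h) $ i" using fe by simp
        then show ?thesis unfolding f_def using E3 by simp
      qed
      define C where "C = Am k h - Am k g"
      have sC: "supp_ge C (int k - 1)" unfolding C_def by (rule supp_diff[OF supp_Am supp_Am])
      have CZ: "C$r$s \<in> \<int>" for r s
      proof (cases "Fset k r s")
        case True
        then obtain i where "e i = (r,s)" using esurj by blast
        then show ?thesis using ints[of i] unfolding C_def by (metis fst_conv snd_conv vector_minus_component)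
      next
        case False
        then have "C$r$s = 0" using sC unfolding supp_ge_def Fset_def by force
        then show ?thesis by simp
      qed
      have "(mat 1 + Am k g) ** (mat 1 + C) = mat 1 + C + (Am k g + Am k g ** C)"
        by (simp add: matrix_add_ldistrib matrix_add_rdistrib')
      also have "\<dots> = mat 1 + Am k h" using prod_zero[OF kn supp_Am sC] unfolding C_def by simp
      finally have AC: "(mat 1 + Am k g) ** (mat 1 + C) = mat 1 + Am k h" .
      have "g ** (mat 1 + C) = ((mat 1 + Mp k g) ** (mat 1 + Am k g)) ** (mat 1 + C)"
        using factor[OF k2 g] by simp
      also have "\<dots> = (mat 1 + Mp k h) ** (mat 1 + Am k h)" unfolding matrix_mul_assoc[symmetric] AC M ..
      also have "\<dots> = h" by (rule factor[OF k2 h])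
      finally have hg: "h = g ** (mat 1 + C)" by simp
      have "mat 1 + C \<in> UkZ k"
      proof -
        have C0: "C$r$s = 0" if "dl r s < int k - 1" for r s using sC that unfolding supp_ge_def by force
        have "mat 1 + C \<in> UR" unfolding UR_iff
        proof
          show "\<forall>i. (mat 1 + C)$i$i = 1" using C0 k2 by (simp add: mat_def dl_def)
          show "supp_ge (mat 1 + C) 0" using supp_add[OF supp_mat1 supp_mono[OF sC]] k2 by simp
        qed
        moreover have "(mat 1 + C)$r$s = 0" if "Mset k r s" for r s
        proof -
          have "r \<noteq> s" using that by (auto simp: Mset_def dl_def)
          then show ?thesis using C0[of r s] that by (simp add: mat_def Mset_def)
        qed
        moreover have "(mat 1 + C)$r$s \<in> \<int>" for r s using CZ[of r s] by (simp add: mat_def)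
        ultimately show ?thesis unfolding UkZ_def UkR_def Mset_def dl_def by blast
      qed
      then show "\<exists>\<gamma>\<in>UkZ k. h = g ** \<gamma>" using hg by blast
    next
      fix g h :: "real^('n::{finite,linorder})^('n::{finite,linorder})" assume g: "g \<in> UR" and h: "h \<in> UR" and "\<exists>\<gamma>\<in>UkZ k. h = g ** \<gamma>"
      then obtain \<gamma> where \<gamma>: "\<gamma> \<in> UkZ k" "h = g ** \<gamma>" by blast
      have \<gamma>UR: "\<gamma> \<in> UR" and \<gamma>M: "\<And>r s. Mset k r s \<Longrightarrow> \<gamma>$r$s = 0" and \<gamma>Z: "\<And>r s. \<gamma>$r$s \<in> \<int>"
        using \<gamma>(1) unfolding UkZ_def UkR_def Mset_def dl_def by auto
      define C where "C = \<gamma> - mat 1"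
      have sC: "supp_ge C (int k - 1)"
        unfolding supp_ge_def
      proof (intro allI impI)
        fix r s assume nz: "C$r$s \<noteq> 0"
        consider "dl r s < 0" | "dl r s = 0" | "Mset k r s" | "int k - 1 \<le> dl r s"
          unfolding Mset_def by linarith
        then show "int k - 1 \<le> dl r s"
        proof cases
          case 1
          then have "\<gamma>$r$s = 0" "r \<noteq> s" using \<gamma>UR dl_0[of r s] unfolding UR_iff supp_ge_def by force+
          then show ?thesis using nz unfolding C_def by (simp add: mat_def)
        next
          case 2
          then have "r = s" using dl_0 by blast
          then show ?thesis using nz \<gamma>UR unfolding C_def UR_iff by (simp add: mat_def)
        next
          case 3
          then have "r \<noteq> s" by (auto simp: Mset_def dl_def)
          then show ?thesis using nz \<gamma>M[OF 3] unfolding C_def by (simp add: mat_def)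
        qed simp
      qed
      have \<gamma>C: "\<gamma> = mat 1 + C" unfolding C_def by simp
      have R: "Mp k h = Mp k g" "Am k h = Am k g + C"
        using rmul[OF k2 kn g sC] \<gamma>(2) \<gamma>C by simp_all
      have CZ: "C$r$s \<in> \<int>" for r s using \<gamma>Z[of r s] unfolding C_def by (simp add: mat_def)
      have "exp (2 * of_real pi * \<i> * of_real ((Am k g + C) $ fst (e i) $ snd (e i))) = exp (2 * of_real pi * \<i> * of_real (Am k g $ fst (e i) $ snd (e i)))" for i
        using E2[OF CZ, of "Am k g $ fst (e i) $ snd (e i)"] by simp
      then show "f g = f h" unfolding f_def R by (simp add: vec_eq_iff)
    qed
    show "\<forall>g\<in>UR. \<exists>L. (f has_derivative L) (at g) \<and> (\<forall>X\<in>strict_upper. L X = 0 \<longrightarrow> X = 0)"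
    proof
      fix g :: "real^('n::{finite,linorder})^('n::{finite,linorder})" assume g: "g \<in> UR"
      show "\<exists>L. (f has_derivative L) (at g) \<and> (\<forall>X\<in>strict_upper. L X = 0 \<longrightarrow> X = 0)"
      proof (intro exI[of _ "D g"] conjI ballI impI)
        show "(f has_derivative D g) (at g)" using D by blast
      next
        fix X :: "real^('n::{finite,linorder})^('n::{finite,linorder})"
        assume X: "X \<in> strict_upper" and LX: "D g X = 0"
        have vd: "((\<lambda>t. f (g + t *\<^sub>R X)) has_derivative (\<lambda>t. t *\<^sub>R D g X)) (at 0)"
          using vdd[OF D, of g X] unfolding has_vector_derivative_def .
        have sd: "((\<lambda>t. snd (f (g + t *\<^sub>R X))) has_vector_derivative snd (D g X)) (at 0)"
          using has_derivative_snd[OF vd] unfolding has_vector_derivative_def by simp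
        have md: "((\<lambda>t. snd (f (g + t *\<^sub>R X))) has_vector_derivative Mp k X) (at 0)"
        proof -
          have "(\<lambda>t. snd (f (g + t *\<^sub>R X))) = (\<lambda>t. Mp k g + t *\<^sub>R Mp k X)"
            unfolding f_def by (simp add: Mp_add Mp_scale)
          moreover have "((\<lambda>t. Mp k g + t *\<^sub>R Mp k X) has_vector_derivative Mp k X) (at 0)"
            unfolding has_vector_derivative_def by (auto intro!: derivative_eq_intros)
          ultimately show ?thesis by simp
        qed
        have MX: "Mp k X = 0" using vector_derivative_unique_at[OF md sd] LX by simp
        have Pe: "Mp k (g + t *\<^sub>R X) = Mp k g" for t by (simp add: Mp_add Mp_scale MX)
        define Y where "Y = Pinv k g ** Fp k X"
        have Ae: "Am k (g + t *\<^sub>R X) = Am k g + t *\<^sub>R Y" for t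
        proof -
          have "Pinv k (g + t *\<^sub>R X) = Pinv k g" unfolding Pinv_def Pe ..
          then show ?thesis unfolding Am_def Y_def
            by (simp add: Fp_add Fp_scale matrix_add_ldistrib matrix_scalar_ac scalar_matrix_assoc)
        qed
        have Yz: "Y$r$s = 0" if F: "Fset k r s" for r s
        proof -
          obtain i where ei: "e i = (r,s)" using esurj[OF F] by blast
          have "((\<lambda>t. fst (f (g + t *\<^sub>R X)) $ i) has_derivative (\<lambda>t. fst (t *\<^sub>R D g X) $ i)) (at 0)"
            using bounded_linear.has_derivative[OF bounded_linear_vec_nth has_derivative_fst[OF vd]] .
          then have d1: "((\<lambda>t. fst (f (g + t *\<^sub>R X)) $ i) has_vector_derivative 0) (at 0)"
            unfolding has_vector_derivative_def using LX by simp
          have "(\<lambda>t. fst (f (g + t *\<^sub>R X)) $ i) = (\<lambda>t. exp (2 * of_real pi * \<i> * of_real (Am k g $ r $ s + t * Y $ r $ s)))"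
            unfolding f_def using ei by (simp add: Ae)
          then have d2: "((\<lambda>t. fst (f (g + t *\<^sub>R X)) $ i) has_vector_derivative
              (exp (2 * of_real pi * \<i> * of_real (Am k g $ r $ s)) * (2 * of_real pi * \<i> * of_real (Y $ r $ s)))) (at 0)"
            using E5 by simp
          have "exp (2 * of_real pi * \<i> * of_real (Am k g $ r $ s)) * (2 * of_real pi * \<i> * of_real (Y $ r $ s)) = 0"
            using vector_derivative_unique_at[OF d2 d1] .
          then show ?thesis by simp
        qed
        have sY: "supp_ge Y (int k - 1)" unfolding Y_def using supp_mult[OF supp_Pinv supp_Fp] by simp
        have Y0: "Y = 0"
        proof -
          have "Y$r$s = 0" for r s
          proof (cases "Fset k r s")
            case True then show ?thesis using Yz by blast
          next
            case False then show ?thesis using sY unfolding supp_ge_def Fset_def by force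
          qed
          then show ?thesis by (simp add: vec_eq_iff)
        qed
        have FX: "Fp k X = 0"
        proof -
          have "Fp k X = ((mat 1 + Mp k g) ** Pinv k g) ** Fp k X" unfolding PP1 by simp
          also have "\<dots> = 0" unfolding matrix_mul_assoc[symmetric] Y_def[symmetric] Y0 by simp
          finally show ?thesis .
        qed
        have "X$r$s = 0" for r s
        proof (cases "dl r s \<le> 0")
          case True
          then have "s \<le> r" using dl_pos[of r s] by (simp add: not_less[symmetric])
          then show ?thesis using X unfolding strict_upper_def by blast
        next
          case False
          show ?thesis
          proof (cases "Mset k r s")
            case True
            then have "Mp k X $ r $ s = X $ r $ s" by (simp add: Mp_def)
            then show ?thesis using MX by simp
          next
            case False
            then have "Fset k r s" using \<open>\<not> dl r s \<le> 0\<close> unfolding Mset_def Fset_def by linarith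
            then have "Fp k X $ r $ s = X $ r $ s" by (simp add: Fp_def)
            then show ?thesis using FX by simp
          qed
        qed
        then show "X = 0" by (simp add: vec_eq_iff)
      qed
    qed
  qed
qed

end
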